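(* Let $D$ be a squarefree integer and let $q>3$ be a prime dividing $D$. Then $H_D^{(q)}=\{kP : k\text{ odd and } x(kP)\equiv -18\pmod q\}$; in particular $H_D^{(q)}$ does not depend on $D$.
   Context: $C_D\subset\mathbb{P}^4$ is the curve over $\mathbb{Q}$ given by $X_0^2-2X_1^2+X_2^2=0$, $X_1^2-2X_2^2+DX_3^2=0$, $X_2^2-2DX_3^2+X_4^2=0$; $C_D(\mathbb{F}_q)$ denotes the $\mathbb{F}_q$-points of the variety defined by these equations reduced mod $q$. $E^{(1)}: y^2=x(x+2)(x+6)$, $P=(6,24)\in E^{(1)}(\mathbb{Q})$, $H=\{kP: k\text{ odd}\}$, and $\phi:C_D\to E^{(1)}$ is $\phi([x_0:\dots:x_4])=(6x_0^2/x_4^2,\,24x_0x_1x_2/x_4^3)$, with $\phi_q$ its reduction mod $q$. $\mathrm{red}_q:E^{(1)}(\mathbb{Q})\to E^{(1)}(\mathbb{F}_q)$ is reduction mod $q$, and $H_D^{(q)}:=\{R\in H : \mathrm{red}_q(R)\in\phi_q(C_D(\mathbb{F}_q))\}$. The condition $x(kP)\equiv-18\pmod q$ means the reduction of $kP$ has $x$-coordinate $-18\in\mathbb{F}_q$. *)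

theory Defs
  imports Complex_Main "HOL-Computational_Algebra.Squarefree" "HOL-Number_Theory.Cong"
begin

(* Points of E^(1): y^2 = x(x+2)(x+6) = x^3 + 8x^2 + 12x over Q.
   None is the point at infinity O. *)
type_synonym ratpt = "(rat \<times> rat) option"

definition on_E1 :: "ratpt \<Rightarrow> bool" where
  "on_E1 R = (case R of None \<Rightarrow> True | Some (x, y) \<Rightarrow> y^2 = x * (x + 2) * (x + 6))"

definition ec_neg :: "ratpt \<Rightarrow> ratpt" where
  "ec_neg R = (case R of None \<Rightarrow> None | Some (x, y) \<Rightarrow> Some (x, - y))"

definition ec_add :: "ratpt \<Rightarrow> ratpt \<Rightarrow> ratpt" where
  "ec_add R S = (case R of None \<Rightarrow> S | Some (x1, y1) \<Rightarrow>
     (case S of None \<Rightarrow> R | Some (x2, y2) \<Rightarrow>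
       (if x1 = x2 \<and> y1 = - y2 then None
        else let l = (if x1 = x2 then (3 * x1^2 + 16 * x1 + 12) / (2 * y1)
                      else (y2 - y1) / (x2 - x1));
                 x3 = l^2 - 8 - x1 - x2
             in Some (x3, l * (x1 - x3) - y1))))"

definition ec_mult :: "int \<Rightarrow> ratpt \<Rightarrow> ratpt" where
  "ec_mult k R = (if k \<ge> 0 then (ec_add R ^^ nat k) None
                  else ec_neg ((ec_add R ^^ nat (- k)) None))"

definition P0 :: ratpt where "P0 = Some (6, 24)"

definition H :: "ratpt set" where "H = {ec_mult k P0 | k. odd k}"

(* Elements of F_q are represented by integers in {0..<q}. *)

definition fq_div :: "int \<Rightarrow> int \<Rightarrow> int \<Rightarrow> int" where
  "fq_div q a b = (THE c. c \<in> {0..<q} \<and> [b * c = a] (mod q))"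

definition q_integral :: "int \<Rightarrow> rat \<Rightarrow> bool" where
  "q_integral q r = (\<not> q dvd snd (quotient_of r))"

definition rat_mod :: "int \<Rightarrow> rat \<Rightarrow> int" where
  "rat_mod q r = fq_div q (fst (quotient_of r)) (snd (quotient_of r))"

definition red :: "int \<Rightarrow> ratpt \<Rightarrow> (int \<times> int) option" where
  "red q R = (case R of None \<Rightarrow> None | Some (x, y) \<Rightarrow>
     (if q_integral q x \<and> q_integral q y then Some (rat_mod q x, rat_mod q y) else None))"

(* F_q-points of C_D, given by representatives (x_0,...,x_4) in F_q^5 \ {0}
   (entries v 0, ..., v 4; v i = 0 for i > 4) *)
definition CD_Fq :: "int \<Rightarrow> int \<Rightarrow> (nat \<Rightarrow> int) set" where
  "CD_Fq D q = {v. (\<forall>i\<le>4. v i \<in> {0..<q}) \<and> (\<forall>i>4. v i = 0) \<and> (\<exists>i\<le>4. v i \<noteq> 0) \<and>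
      [v 0 ^ 2 - 2 * v 1 ^ 2 + v 2 ^ 2 = 0] (mod q) \<and>
      [v 1 ^ 2 - 2 * v 2 ^ 2 + D * v 3 ^ 2 = 0] (mod q) \<and>
      [v 2 ^ 2 - 2 * D * v 3 ^ 2 + v 4 ^ 2 = 0] (mod q)}"

definition phi_q :: "int \<Rightarrow> (nat \<Rightarrow> int) \<Rightarrow> (int \<times> int) option" where
  "phi_q q v = Some (fq_div q (6 * v 0 ^ 2) (v 4 ^ 2), fq_div q (24 * v 0 * v 1 * v 2) (v 4 ^ 3))"

definition phi_q_image :: "int \<Rightarrow> int \<Rightarrow> (int \<times> int) option set" where
  "phi_q_image D q = {phi_q q v | v. v \<in> CD_Fq D q \<and> v 4 \<noteq> 0}"

definition H_D_q :: "int \<Rightarrow> int \<Rightarrow> ratpt set" where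
  "H_D_q D q = {R \<in> H. red q R \<in> phi_q_image D q}"

end

theory Submission
  imports Defs
begin


lemma chord_identity:
  fixes x1 x2 y1 y2 l x3 :: "'a::field"
  assumes h1: "y1^2 = x1*(x1+2)*(x1+6)" and h2: "y2^2 = x2*(x2+2)*(x2+6)"
    and ne: "x1 \<noteq> x2" and hl: "l = (y2 - y1)/(x2 - x1)" and h3: "x3 = l^2 - 8 - x1 - x2"
  shows "x*(x+2)*(x+6) - (l*x + (y1 - l*x1))^2 = (x-x1)*(x-x2)*(x-x3)"
proof -
  define \<nu> where "\<nu> = y1 - l*x1"
  define A where "A = 12 - 2*l*\<nu> - (x1*x2 + x1*x3 + x2*x3)"
  define B where "B = x1*x2*x3 - \<nu>^2"
  have gen: "\<And>z. z*(z+2)*(z+6) - (l*z + \<nu>)^2 - (z-x1)*(z-x2)*(z-x3) = A*z + B"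
    unfolding A_def B_def h3 by (simp add: algebra_simps power2_eq_square power3_eq_cube)
  have hl2: "l*(x2-x1) = y2 - y1" using ne hl by (simp add: field_simps)
  have g1: "A*x1 + B = 0" using gen[of x1] h1 unfolding \<nu>_def by (simp add: algebra_simps power2_eq_square)
  have e2: "l*x2 + \<nu> = y2" using hl2 unfolding \<nu>_def by (simp add: algebra_simps)
  have g2: "A*x2 + B = 0" using gen[of x2] h2 e2 by simp
  have "A*(x1-x2) = (A*x1+B) - (A*x2+B)" by (simp add: algebra_simps)
  hence "A*(x1-x2) = 0" using g1 g2 by simp
  hence A0: "A = 0" using ne by simp
  hence "B = 0" using g1 by simp
  thus ?thesis using gen[of x] A0 unfolding \<nu>_def by (simp add: algebra_simps)
qed

lemma int_sq_2_impossible: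
  fixes n d :: int
  assumes "coprime n d" and "n^2 = c * d^2" and "c = 2 \<or> c = 6"
  shows False
proof -
  have "even (n^2)" using assms(2,3) by auto
  hence "even n" by simp
  then obtain m where m: "n = 2*m" by blast
  have "4*m^2 = c*d^2" using assms(2) m by (simp add: power_mult_distrib)
  hence "2*m^2 = (c div 2)*d^2" using assms(3) by auto
  hence "even ((c div 2)*d^2)" by (metis dvd_triv_left)
  moreover have "odd (c div 2)" using assms(3) by auto
  ultimately have "even (d^2)" by simp
  hence "even d" by simp
  with \<open>even n\<close> assms(1) show False by fastforce
qed

lemma rat_sq_ne:
  fixes t :: rat
  assumes "c = 2 \<or> c = 6"
  shows "t^2 \<noteq> of_int c"
proof
  assume h: "t^2 = of_int c"
  obtain n d where q: "quotient_of t = (n,d)" by (cases "quotient_of t") auto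
  have t: "t = of_int n / of_int d" using quotient_of_div[OF q] .
  have d0: "d > 0" using quotient_of_denom_pos[OF q] .
  have cp: "coprime n d" using quotient_of_coprime[OF q] .
  have "(of_int n / of_int d)^2 = (of_int c :: rat)" using h t by simp
  hence "(of_int (n^2) :: rat) = of_int (c * d^2)" using d0 by (simp add: field_simps power2_eq_square)
  hence "n^2 = c*d^2" by (simp only: of_int_eq_iff)
  thus False using int_sq_2_impossible[OF cp _ assms] by blast
qed

lemma rat_sq_ne2: "(t::rat)^2 \<noteq> 2" using rat_sq_ne[of 2 t] by simp
lemma rat_sq_ne6: "(t::rat)^2 \<noteq> 6" using rat_sq_ne[of 6 t] by simp

definition sqc :: "rat \<Rightarrow> rat \<Rightarrow> bool" where "sqc c v = (\<exists>t. v = c * t^2)"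

definition clA :: "ratpt \<Rightarrow> bool" where
  "clA R = (\<exists>x y. R = Some (x,y) \<and> y^2 = x*(x+2)*(x+6) \<and> sqc 6 x \<and> sqc 2 (x+2) \<and> sqc 3 (x+6))"

definition clB :: "ratpt \<Rightarrow> bool" where
  "clB R = (R = None \<or> (\<exists>x y. R = Some (x,y) \<and> y^2 = x*(x+2)*(x+6) \<and> sqc 1 x \<and> sqc 1 (x+2) \<and> sqc 1 (x+6)))"

lemma add_P0_chord:
  fixes x y :: rat
  assumes "x \<noteq> 6"
  shows "ec_add P0 (Some (x,y)) = Some ((((y-24)/(x-6))^2 - 8 - 6 - x),
           ((y-24)/(x-6)) * (6 - (((y-24)/(x-6))^2 - 8 - 6 - x)) - 24)"
  using assms by (simp add: ec_add_def P0_def Let_def)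

lemma B_to_A:
  assumes "clB R" shows "clA (ec_add P0 R)"
proof (cases "R = None")
  case True
  have "ec_add P0 R = Some (6,24)" using True by (simp add: ec_add_def P0_def)
  moreover have "sqc 6 (6::rat)" unfolding sqc_def by (rule exI[of _ 1]) simp
  moreover have "sqc 2 (6+2::rat)" unfolding sqc_def by (rule exI[of _ 2]) simp
  moreover have "sqc 3 (6+6::rat)" unfolding sqc_def by (rule exI[of _ 2]) simp
  ultimately show ?thesis unfolding clA_def by simp
next
  case False
  then obtain x y a b c where R: "R = Some (x,y)" and cu: "y^2 = x*(x+2)*(x+6)"
     and a: "x = a^2" and b: "x+2 = b^2" and c: "x+6 = c^2"
    using assms by (auto simp: clB_def sqc_def)
  have x6: "x \<noteq> 6" using a rat_sq_ne6[of a] by auto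
  have a0: "a \<noteq> 0" using a b rat_sq_ne2[of b] by auto
  have b0: "b \<noteq> 0" proof assume "b = 0" hence "a^2 = -2" using a b by simp
      moreover have "a^2 \<ge> 0" by simp ultimately show False by simp qed
  have c0: "c \<noteq> 0" proof assume "c = 0" hence "a^2 = -6" using a c by simp
      moreover have "a^2 \<ge> 0" by simp ultimately show False by simp qed
  define l where "l = (y-24)/(x-6)"
  define x3 where "x3 = l^2 - 8 - 6 - x"
  have cu6: "(24::rat)^2 = 6*(6+2)*(6+6)" by simp
  have id: "\<And>z. z*(z+2)*(z+6) - (l*z + (24 - l*6))^2 = (z-6)*(z-x)*(z-x3)"
    using chord_identity[OF cu6 cu, of l x3] x6 unfolding l_def x3_def by auto
  have e0: "6*x*x3 = (24 - 6*l)^2" using id[of 0] by (simp add: algebra_simps)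
  have e2: "8*(x+2)*(x3+2) = (24 - 8*l)^2" using id[of "-2"] by (simp add: algebra_simps power2_eq_square)
  have e6: "12*(x+6)*(x3+6) = (24 - 12*l)^2" using id[of "-6"] by (simp add: algebra_simps power2_eq_square)
  have s0: "x3 = 6 * ((24 - 6*l)/(6*a))^2" using e0 a a0 by (simp add: field_simps power2_eq_square)
  have s2: "x3 + 2 = 2 * ((24 - 8*l)/(4*b))^2" using e2 b b0 by (simp add: field_simps power2_eq_square)
  have s6: "x3 + 6 = 3 * ((24 - 12*l)/(6*c))^2" using e6 c c0 by (simp add: field_simps power2_eq_square)
  have oc: "(l*(6-x3) - 24)^2 = x3*(x3+2)*(x3+6)" using id[of x3] by (simp add: algebra_simps power2_eq_square)
  have "ec_add P0 R = Some (x3, l*(6-x3) - 24)" unfolding R l_def x3_def using add_P0_chord[OF x6] by simp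
  thus ?thesis unfolding clA_def sqc_def using s0 s2 s6 oc by blast
qed

lemma A_to_B:
  assumes "clA R" shows "clB (ec_add P0 R)"
proof -
  obtain x y a b c where R: "R = Some (x,y)" and cu: "y^2 = x*(x+2)*(x+6)"
     and a: "x = 6*a^2" and b: "x+2 = 2*b^2" and c: "x+6 = 3*c^2"
    using assms by (auto simp: clA_def sqc_def)
  show ?thesis
  proof (cases "x = 6")
    case True
    hence "y^2 = 24^2" using cu by simp
    hence "(y-24)*(y+24) = 0" by (simp add: algebra_simps power2_eq_square)
    hence "y = 24 \<or> y = -24" by (simp add: eq_neg_iff_add_eq_0)
    thus ?thesis
    proof
      assume "y = -24"
      hence "ec_add P0 R = None" using R True by (simp add: ec_add_def P0_def)
      thus ?thesis by (simp add: clB_def)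
    next
      assume "y = 24"
      hence "ec_add P0 R = Some (1/4, 15/8)" using R True by (simp add: ec_add_def P0_def Let_def power2_eq_square)
      moreover have "sqc 1 (1/4::rat)" unfolding sqc_def by (rule exI[of _ "1/2"]) (simp add: power2_eq_square)
      moreover have "sqc 1 (1/4+2::rat)" unfolding sqc_def by (rule exI[of _ "3/2"]) (simp add: power2_eq_square)
      moreover have "sqc 1 (1/4+6::rat)" unfolding sqc_def by (rule exI[of _ "5/2"]) (simp add: power2_eq_square)
      moreover have "(15/8::rat)^2 = 1/4*(1/4+2)*(1/4+6)" by (simp add: power2_eq_square)
      ultimately show ?thesis unfolding clB_def by blast
    qed
  next
    case x6: False
    have a0: "a \<noteq> 0" proof assume "a = 0" hence "c^2 = 2" using a c by simp
        thus False using rat_sq_ne2 by blast qed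
    have b0: "b \<noteq> 0" proof assume "b = 0" hence "6*a^2 = -2" using a b by simp
        moreover have "6*a^2 \<ge> 0" by simp ultimately show False by simp qed
    have c0: "c \<noteq> 0" proof assume "c = 0" hence "6*a^2 = -6" using a c by simp
        moreover have "6*a^2 \<ge> 0" by simp ultimately show False by simp qed
    define l where "l = (y-24)/(x-6)"
    define x3 where "x3 = l^2 - 8 - 6 - x"
    have cu6: "(24::rat)^2 = 6*(6+2)*(6+6)" by simp
    have id: "\<And>z. z*(z+2)*(z+6) - (l*z + (24 - l*6))^2 = (z-6)*(z-x)*(z-x3)"
      using chord_identity[OF cu6 cu, of l x3] x6 unfolding l_def x3_def by auto
    have e0: "6*x*x3 = (24 - 6*l)^2" using id[of 0] by (simp add: algebra_simps)
    have e2: "8*(x+2)*(x3+2) = (24 - 8*l)^2" using id[of "-2"] by (simp add: algebra_simps power2_eq_square)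
    have e6: "12*(x+6)*(x3+6) = (24 - 12*l)^2" using id[of "-6"] by (simp add: algebra_simps power2_eq_square)
    have s0: "x3 = 1 * ((24 - 6*l)/(6*a))^2" using e0 a a0 by (simp add: field_simps power2_eq_square)
    have s2: "x3 + 2 = 1 * ((24 - 8*l)/(4*b))^2" using e2 b b0 by (simp add: field_simps power2_eq_square)
    have s6: "x3 + 6 = 1 * ((24 - 12*l)/(6*c))^2" using e6 c c0 by (simp add: field_simps power2_eq_square)
    have oc: "(l*(6-x3) - 24)^2 = x3*(x3+2)*(x3+6)" using id[of x3] by (simp add: algebra_simps power2_eq_square)
    have "ec_add P0 R = Some (x3, l*(6-x3) - 24)" unfolding R l_def x3_def using add_P0_chord[OF x6] by simp
    thus ?thesis unfolding clB_def sqc_def using s0 s2 s6 oc by blast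
  qed
qed

lemma iter_class: "(odd n \<longrightarrow> clA ((ec_add P0 ^^ n) None)) \<and> (even n \<longrightarrow> clB ((ec_add P0 ^^ n) None))"
proof (induction n)
  case 0 then show ?case by (simp add: clB_def)
next
  case (Suc n) then show ?case using A_to_B B_to_A by auto
qed

lemma odd_mult_clA:
  assumes "odd k" shows "clA (ec_mult k P0)"
proof (cases "k \<ge> 0")
  case True
  hence "odd (nat k)" using assms by (simp add: even_nat_iff)
  thus ?thesis using iter_class[of "nat k"] True by (simp add: ec_mult_def)
next
  case False
  hence "odd (nat (-k))" using assms by (simp add: even_nat_iff)
  hence "clA ((ec_add P0 ^^ nat (-k)) None)" using iter_class[of "nat (-k)"] by simp
  thus ?thesis using False by (auto simp: ec_mult_def clA_def ec_neg_def)
qed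



lemma pc: "prime (q::int) \<Longrightarrow> q dvd a*b \<Longrightarrow> \<not> q dvd a \<Longrightarrow> q dvd b"
  using prime_dvd_mult_iff by blast

lemma fq_ex1:
  assumes q: "prime (q::int)" and nb: "\<not> q dvd b"
  shows "\<exists>!c. c \<in> {0..<q} \<and> [b * c = a] (mod q)"
proof -
  have q0: "q > 0" using q prime_gt_0_int by blast
  have "coprime b q" using prime_imp_coprime[OF q nb] by (simp add: ac_simps)
  then obtain u where u: "[b*u = 1] (mod q)" using cong_solve_coprime_int by blast
  define c where "c = (a*u) mod q"
  have "[b*c = b*(a*u)] (mod q)" unfolding c_def by (intro cong_mult cong_refl) simp
  also have "b*(a*u) = (b*u)*a" by (simp add: ac_simps)
  also have "[(b*u)*a = 1*a] (mod q)" by (intro cong_mult u cong_refl)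
  finally have c1: "[b*c = a] (mod q)" by simp
  have c2: "c \<in> {0..<q}" unfolding c_def using q0 by simp
  show ?thesis
  proof (rule ex1I[of _ c])
    show "c \<in> {0..<q} \<and> [b * c = a] (mod q)" using c1 c2 by simp
  next
    fix c' assume h: "c' \<in> {0..<q} \<and> [b * c' = a] (mod q)"
    hence "[b*c' = b*c] (mod q)" using c1 by (meson cong_sym cong_trans)
    hence "[c' = c] (mod q)" using cong_mult_lcancel[OF \<open>coprime b q\<close>] by simp
    thus "c' = c" using cong_less_imp_eq_int h c2 by auto
  qed
qed

lemma fq1:
  assumes "prime (q::int)" and "\<not> q dvd b"
  shows "fq_div q a b \<in> {0..<q} \<and> [b * fq_div q a b = a] (mod q)"
  unfolding fq_div_def using theI'[OF fq_ex1[OF assms]] .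

lemma fq2:
  assumes "prime (q::int)" and "\<not> q dvd b" and "c \<in> {0..<q}" and "[b * c = a] (mod q)"
  shows "fq_div q a b = c"
  unfolding fq_div_def using fq_ex1[OF assms(1,2)] assms(3,4) by (simp add: the1_equality)

lemma R1:
  assumes q: "prime (q::int)" and qi: "q_integral q x" and x: "x = of_int A / of_int B" and nb: "\<not> q dvd B"
  shows "[rat_mod q x * B = A] (mod q)" and "rat_mod q x \<in> {0..<q}"
proof -
  obtain N M where NM: "quotient_of x = (N,M)" by (cases "quotient_of x") auto
  have M0: "M > 0" using quotient_of_denom_pos[OF NM] .
  have nM: "\<not> q dvd M" using qi NM by (simp add: q_integral_def)
  have B0: "B \<noteq> 0" using nb by auto
  have "of_int N / of_int M = (of_int A / of_int B :: rat)" using quotient_of_div[OF NM] x by simp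
  hence "(of_int (N*B) :: rat) = of_int (A*M)" using M0 B0 by (simp add: field_simps)
  hence NB: "N*B = A*M" by (simp only: of_int_eq_iff)
  have rm: "rat_mod q x = fq_div q N M" unfolding rat_mod_def NM by simp
  from fq1[OF q nM, of N] have r1: "rat_mod q x \<in> {0..<q}" and r2: "[M * rat_mod q x = N] (mod q)" using rm by auto
  show "rat_mod q x \<in> {0..<q}" using r1 .
  have "[M * (rat_mod q x * B) = (M * rat_mod q x) * B] (mod q)" by (simp add: ac_simps)
  also have "[(M * rat_mod q x) * B = N * B] (mod q)" by (intro cong_mult r2 cong_refl)
  also have "N*B = M*A" using NB by (simp add: ac_simps)
  finally have "[M * (rat_mod q x * B) = M*A] (mod q)" .
  moreover have "coprime M q" using prime_imp_coprime[OF q nM] by (simp add: ac_simps)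
  ultimately show "[rat_mod q x * B = A] (mod q)" using cong_mult_lcancel by blast
qed

lemma G:
  assumes q: "prime (q::int)" and qi: "q_integral q x" and nc: "\<not> q dvd c"
    and x: "x = of_int c * a^2 + of_int s"
  shows "\<exists>n d. \<not> q dvd d \<and> [rat_mod q x * d^2 = c*n^2 + s*d^2] (mod q)"
proof -
  obtain n d where nd: "quotient_of a = (n,d)" by (cases "quotient_of a") auto
  have d0: "d > 0" using quotient_of_denom_pos[OF nd] .
  have cp: "coprime n d" using quotient_of_coprime[OF nd] .
  have a: "a = of_int n / of_int d" using quotient_of_div[OF nd] .
  have xe: "x = of_int (c*n^2 + s*d^2) / of_int (d^2)" using x a d0 by (simp add: field_simps power2_eq_square)
  obtain N M where NM: "quotient_of x = (N,M)" by (cases "quotient_of x") auto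
  have M0: "M > 0" using quotient_of_denom_pos[OF NM] .
  have nM: "\<not> q dvd M" using qi NM by (simp add: q_integral_def)
  have "of_int N / of_int M = (of_int (c*n^2 + s*d^2) / of_int (d^2) :: rat)" using quotient_of_div[OF NM] xe by simp
  hence "(of_int (N*d^2) :: rat) = of_int ((c*n^2 + s*d^2)*M)" using M0 d0 by (simp add: field_simps)
  hence E: "N*d^2 = (c*n^2 + s*d^2)*M" by (simp only: of_int_eq_iff)
  have nd': "\<not> q dvd d"
  proof
    assume qd: "q dvd d"
    have "q dvd N*d^2" using qd by (simp add: power2_eq_square)
    hence "q dvd (c*n^2 + s*d^2)*M" using E by simp
    hence h1: "q dvd c*n^2 + s*d^2" using pc[OF q] nM by (metis mult.commute)
    have "q dvd s*d^2" using qd by (simp add: power2_eq_square)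
    hence "q dvd c*n^2" using h1 by (metis dvd_add_left_iff)
    hence "q dvd n^2" using pc[OF q] nc by blast
    hence "q dvd n" using prime_dvd_power_iff[OF q] by simp
    hence "is_unit q" using qd cp by (meson coprime_common_divisor)
    thus False using q not_prime_unit by blast
  qed
  have "\<not> q dvd d^2" using nd' prime_dvd_power_iff[OF q] by simp
  from R1(1)[OF q qi xe this] nd' show ?thesis by blast
qed

lemma construct:
  fixes q D w0 w1 w2 w4 b0 :: int
  assumes q: "prime q" and qD: "q dvd D" and n6: "\<not> q dvd 6"
    and h4: "q dvd w4^2 + w2^2" and h1: "q dvd w1^2 - 2*w2^2" and h0: "q dvd w0^2 - 3*w2^2"
    and n2: "\<not> q dvd w2" and b0r: "b0 \<in> {0..<q}" and hb: "q dvd b0^2 + 3456"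
  shows "Some ((-18) mod q, b0) \<in> phi_q_image D q"
proof -
  have q0: "q > 0" using q prime_gt_0_int by blast
  have n4: "\<not> q dvd w4"
  proof
    assume "q dvd w4" hence "q dvd w4^2" by (simp add: power2_eq_square)
    hence "q dvd w2^2" using h4 by (metis dvd_add_right_iff)
    thus False using n2 prime_dvd_power_iff[OF q] by simp
  qed
  have c4: "[w4^2 = -(w2^2)] (mod q)" using h4 by (simp add: cong_iff_dvd_diff)
  have c1: "[w1^2 = 2*w2^2] (mod q)" using h1 by (simp add: cong_iff_dvd_diff)
  have c0: "[w0^2 = 3*w2^2] (mod q)" using h0 by (simp add: cong_iff_dvd_diff)
  have cb: "[b0^2 = -3456] (mod q)" using hb by (simp add: cong_iff_dvd_diff)
  define Y where "Y = 24*w0*w1*w2"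
  define Z where "Z = w4^3"
  have "(Z*b0)^2 = (w4^2)^3 * b0^2" unfolding Z_def by (simp add: algebra_simps power2_eq_square power3_eq_cube)
  also have "[(w4^2)^3 * b0^2 = (-(w2^2))^3 * (-3456)] (mod q)" by (intro cong_mult cong_pow c4 cb)
  also have "(-(w2^2))^3 * (-3456) = 576 * (3*w2^2) * (2*w2^2) * w2^2" by (simp add: algebra_simps power2_eq_square power3_eq_cube)
  also have "[576 * (3*w2^2) * (2*w2^2) * w2^2 = 576 * w0^2 * w1^2 * w2^2] (mod q)"
    by (intro cong_mult cong_refl cong_sym[OF c0] cong_sym[OF c1])
  also have "576 * w0^2 * w1^2 * w2^2 = Y^2" unfolding Y_def by (simp add: algebra_simps power2_eq_square)
  finally have "q dvd (Z*b0)^2 - Y^2" by (simp add: cong_iff_dvd_diff)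
  moreover have "(Z*b0)^2 - Y^2 = (Z*b0 - Y)*(Z*b0 + Y)" by (simp add: algebra_simps power2_eq_square)
  ultimately have "q dvd Z*b0 - Y \<or> q dvd Z*b0 + Y" using prime_dvd_mult_iff[OF q] by simp
  then obtain s where s: "s = 1 \<or> s = -1" and hs: "q dvd Z*b0 - s*Y"
  proof
    assume "q dvd Z*b0 - Y" thus ?thesis using that[of 1] by simp
  next
    assume "q dvd Z*b0 + Y" thus ?thesis using that[of "-1"] by simp
  qed
  have s2: "(s*w0)^2 = w0^2" using s by auto
  define v where "v = (\<lambda>j::nat. if j = 0 then (s*w0) mod q else if j = 1 then w1 mod q else if j = 2 then w2 mod q
                      else if j = 4 then w4 mod q else 0)"
  have v0: "v 0 = (s*w0) mod q" and v1: "v 1 = w1 mod q" and v2: "v 2 = w2 mod q" and v3: "v 3 = 0"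
    and v4: "v 4 = w4 mod q" unfolding v_def by simp_all
  have cv0: "[v 0 = s*w0] (mod q)" and cv1: "[v 1 = w1] (mod q)" and cv2: "[v 2 = w2] (mod q)"
    and cv4: "[v 4 = w4] (mod q)" using v0 v1 v2 v4 by simp_all
  have range: "\<forall>i\<le>4. v i \<in> {0..<q}"
  proof (intro allI impI)
    fix i :: nat assume "i \<le> 4"
    hence "i = 0 \<or> i = 1 \<or> i = 2 \<or> i = 3 \<or> i = 4" by auto
    thus "v i \<in> {0..<q}" using q0 unfolding v_def by auto
  qed
  have zero: "\<forall>i>4. v i = 0" unfolding v_def by auto
  have v2nz: "v 2 \<noteq> 0" using n2 v2 by (simp add: dvd_eq_mod_eq_0)
  have v4nz: "v 4 \<noteq> 0" using n4 v4 by (simp add: dvd_eq_mod_eq_0)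
  have nv4: "\<not> q dvd v 4" using n4 v4 by (simp add: dvd_mod_iff)
  have E1: "[v 0 ^ 2 - 2 * v 1 ^ 2 + v 2 ^ 2 = 0] (mod q)"
  proof -
    have "[v 0 ^ 2 - 2 * v 1 ^ 2 + v 2 ^ 2 = (s*w0) ^ 2 - 2 * w1 ^ 2 + w2 ^ 2] (mod q)"
      by (intro cong_add cong_diff cong_mult cong_pow cong_refl cv0 cv1 cv2)
    moreover have "q dvd (s*w0) ^ 2 - 2 * w1 ^ 2 + w2 ^ 2 - 0"
    proof -
      have "(s*w0) ^ 2 - 2 * w1 ^ 2 + w2 ^ 2 - 0 = (w0^2 - 3*w2^2) - 2*(w1^2 - 2*w2^2)" using s2 by (simp add: algebra_simps)
      moreover have "q dvd (w0^2 - 3*w2^2) - 2*(w1^2 - 2*w2^2)" by (rule dvd_diff[OF h0 dvd_mult[OF h1]])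
      ultimately show ?thesis by (simp only:)
    qed
    hence "[(s*w0) ^ 2 - 2 * w1 ^ 2 + w2 ^ 2 = 0] (mod q)" by (simp only: cong_iff_dvd_diff)
    ultimately show ?thesis by (rule cong_trans)
  qed
  have E2: "[v 1 ^ 2 - 2 * v 2 ^ 2 + D * v 3 ^ 2 = 0] (mod q)"
  proof -
    have "[v 1 ^ 2 - 2 * v 2 ^ 2 + D * v 3 ^ 2 = w1 ^ 2 - 2 * w2 ^ 2 + D * 0 ^ 2] (mod q)"
      unfolding v3 by (intro cong_add cong_diff cong_mult cong_pow cong_refl cv1 cv2)
    moreover have "[w1 ^ 2 - 2 * w2 ^ 2 + D * 0 ^ 2 = 0] (mod q)" using h1 by (simp add: cong_iff_dvd_diff)
    ultimately show ?thesis by (rule cong_trans)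
  qed
  have E3: "[v 2 ^ 2 - 2 * D * v 3 ^ 2 + v 4 ^ 2 = 0] (mod q)"
  proof -
    have "[v 2 ^ 2 - 2 * D * v 3 ^ 2 + v 4 ^ 2 = w2 ^ 2 - 2 * D * 0 ^ 2 + w4 ^ 2] (mod q)"
      unfolding v3 by (intro cong_add cong_diff cong_mult cong_pow cong_refl cv4 cv2)
    moreover have "[w2 ^ 2 - 2 * D * 0 ^ 2 + w4 ^ 2 = 0] (mod q)" using h4 by (simp add: cong_iff_dvd_diff add.commute)
    ultimately show ?thesis by (rule cong_trans)
  qed
  have ex: "\<exists>i\<le>4. v i \<noteq> 0" using v2nz by (intro exI[of _ 2]) simp
  have vC: "v \<in> CD_Fq D q" unfolding CD_Fq_def mem_Collect_eq by (intro conjI range zero ex E1 E2 E3)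
  have f1: "fq_div q (6 * v 0 ^ 2) (v 4 ^ 2) = (-18) mod q"
  proof (rule fq2[OF q])
    show "\<not> q dvd v 4 ^ 2" using nv4 prime_dvd_power_iff[OF q] by simp
    show "(-18) mod q \<in> {0..<q}" using q0 by simp
    have "[v 4 ^ 2 * ((-18) mod q) = w4^2 * (-18)] (mod q)" by (intro cong_mult cong_pow cv4) simp
    moreover have "[w4^2 * (-18) = 6 * w0^2] (mod q)"
    proof -
      have "6 * w0^2 - w4^2 * (-18) = 6*(w0^2 - 3*w2^2) + 18*(w4^2 + w2^2)" by (simp add: algebra_simps)
      moreover have "q dvd 6*(w0^2 - 3*w2^2) + 18*(w4^2 + w2^2)" by (rule dvd_add[OF dvd_mult[OF h0] dvd_mult[OF h4]])
      ultimately have "q dvd 6 * w0^2 - w4^2 * (-18)" by (simp only:)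
      hence "[6 * w0^2 = w4^2 * (-18)] (mod q)" by (simp only: cong_iff_dvd_diff)
      thus ?thesis by (rule cong_sym)
    qed
    moreover have "[6 * (s*w0)^2 = 6 * v 0 ^ 2] (mod q)"
      by (intro cong_mult cong_pow cong_refl cong_sym[OF cv0])
    ultimately show "[v 4 ^ 2 * ((-18) mod q) = 6 * v 0 ^ 2] (mod q)" using s2
      by (simp only:) (rule cong_trans[OF cong_trans]; assumption)
  qed
  have f2: "fq_div q (24 * v 0 * v 1 * v 2) (v 4 ^ 3) = b0"
  proof (rule fq2[OF q _ b0r])
    show "\<not> q dvd v 4 ^ 3" using nv4 prime_dvd_power_iff[OF q] by simp
    have "[v 4 ^ 3 * b0 = Z * b0] (mod q)" unfolding Z_def by (intro cong_mult cong_pow cv4 cong_refl)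
    moreover have "[Z*b0 = s*Y] (mod q)" using hs by (simp add: cong_iff_dvd_diff)
    moreover have "[s*Y = 24 * v 0 * v 1 * v 2] (mod q)"
    proof -
      have "s*Y = 24 * (s*w0) * w1 * w2" unfolding Y_def by (simp add: ac_simps)
      moreover have "[24 * (s*w0) * w1 * w2 = 24 * v 0 * v 1 * v 2] (mod q)"
        by (intro cong_mult cong_refl cong_sym[OF cv0] cong_sym[OF cv1] cong_sym[OF cv2])
      ultimately show ?thesis by (simp only:)
    qed
    ultimately show "[v 4 ^ 3 * b0 = 24 * v 0 * v 1 * v 2] (mod q)" by (blast intro: cong_trans)
  qed
  have "phi_q q v = Some ((-18) mod q, b0)" unfolding phi_q_def f1 f2 ..
  thus ?thesis unfolding phi_q_image_def mem_Collect_eq using vC v4nz by (intro exI[of _ v]) simp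
qed

lemma small_ndvd:
  assumes q: "prime (q::int)" and q3: "q > 3"
  shows "\<not> q dvd 2" "\<not> q dvd 3" "\<not> q dvd 6"
proof -
  show n2: "\<not> q dvd 2" using q3 zdvd_imp_le[of q 2] by auto
  show n3: "\<not> q dvd 3" using q3 zdvd_imp_le[of q 3] by auto
  show "\<not> q dvd 6" using n2 n3 prime_dvd_mult_iff[OF q, of 2 3] by simp
qed

lemma sub_dir:
  assumes q: "prime (q::int)" and q3: "q > 3" and qD: "q dvd D" and R: "R \<in> H_D_q D q"
  shows "\<exists>k. R = ec_mult k P0 \<and> odd k \<and> (\<exists>b. red q (ec_mult k P0) = Some ((-18) mod q, b))"
proof -
  have q0: "q > 0" using q prime_gt_0_int by blast
  obtain k where Rk: "R = ec_mult k P0" and k: "odd k" using R by (auto simp: H_D_q_def H_def)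
  obtain v where rv: "red q R = phi_q q v" and vC: "v \<in> CD_Fq D q" and v4: "v 4 \<noteq> 0"
    using R by (auto simp: H_D_q_def phi_q_image_def)
  have vr: "v 4 \<in> {0..<q}" and e1: "[v 0 ^ 2 - 2 * v 1 ^ 2 + v 2 ^ 2 = 0] (mod q)"
    and e2: "[v 1 ^ 2 - 2 * v 2 ^ 2 + D * v 3 ^ 2 = 0] (mod q)"
    and e3: "[v 2 ^ 2 - 2 * D * v 3 ^ 2 + v 4 ^ 2 = 0] (mod q)"
    using vC unfolding CD_Fq_def by auto
  have d1: "q dvd v 0 ^ 2 - 2 * v 1 ^ 2 + v 2 ^ 2" using e1 by (simp add: cong_iff_dvd_diff)
  have d2: "q dvd v 1 ^ 2 - 2 * v 2 ^ 2 + D * v 3 ^ 2" using e2 by (simp add: cong_iff_dvd_diff)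
  have d3: "q dvd v 2 ^ 2 - 2 * D * v 3 ^ 2 + v 4 ^ 2" using e3 by (simp add: cong_iff_dvd_diff)
  have nv4: "\<not> q dvd v 4"
  proof
    assume "q dvd v 4" hence "q \<le> v 4" using v4 vr zdvd_imp_le by auto
    thus False using vr by auto
  qed
  have f1: "fq_div q (6 * v 0 ^ 2) (v 4 ^ 2) = (-18) mod q"
  proof (rule fq2[OF q])
    show "\<not> q dvd v 4 ^ 2" using nv4 prime_dvd_power_iff[OF q] by simp
    show "(-18) mod q \<in> {0..<q}" using q0 by simp
    have "[v 4 ^ 2 * ((-18) mod q) = v 4 ^ 2 * (-18)] (mod q)" by (intro cong_mult cong_refl) simp
    moreover have "[v 4 ^ 2 * (-18) = 6 * v 0 ^ 2] (mod q)"
    proof -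
      have eq: "6 * v 0 ^ 2 - v 4 ^ 2 * (-18) = 6*(v 0 ^ 2 - 2 * v 1 ^ 2 + v 2 ^ 2) + 12*(v 1 ^ 2 - 2 * v 2 ^ 2 + D * v 3 ^ 2)
         + 18*(v 2 ^ 2 - 2 * D * v 3 ^ 2 + v 4 ^ 2) + D * (24 * v 3 ^ 2)" by (simp add: algebra_simps)
      have "q dvd 6*(v 0 ^ 2 - 2 * v 1 ^ 2 + v 2 ^ 2) + 12*(v 1 ^ 2 - 2 * v 2 ^ 2 + D * v 3 ^ 2)
         + 18*(v 2 ^ 2 - 2 * D * v 3 ^ 2 + v 4 ^ 2) + D * (24 * v 3 ^ 2)"
        by (rule dvd_add[OF dvd_add[OF dvd_add[OF dvd_mult[OF d1] dvd_mult[OF d2]] dvd_mult[OF d3]] dvd_mult2[OF qD]])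
      hence "q dvd 6 * v 0 ^ 2 - v 4 ^ 2 * (-18)" by (simp only: eq)
      hence "[6 * v 0 ^ 2 = v 4 ^ 2 * (-18)] (mod q)" by (simp only: cong_iff_dvd_diff)
      thus ?thesis by (rule cong_sym)
    qed
    ultimately show "[v 4 ^ 2 * ((-18) mod q) = 6 * v 0 ^ 2] (mod q)" by (rule cong_trans)
  qed
  have "red q R = Some ((-18) mod q, fq_div q (24 * v 0 * v 1 * v 2) (v 4 ^ 3))"
    using rv f1 by (simp add: phi_q_def)
  thus ?thesis using Rk k by blast
qed

lemma super_dir:
  assumes q: "prime (q::int)" and q3: "q > 3" and qD: "q dvd D" and k: "odd k"
    and red: "red q (ec_mult k P0) = Some ((-18) mod q, b0)"
  shows "red q (ec_mult k P0) \<in> phi_q_image D q"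
proof -
  note ns = small_ndvd[OF q q3]
  obtain x y a b c where R: "ec_mult k P0 = Some (x,y)" and cu: "y^2 = x*(x+2)*(x+6)"
     and a: "x = 6*a^2" and b: "x+2 = 2*b^2" and c: "x+6 = 3*c^2"
    using odd_mult_clA[OF k] by (auto simp: clA_def sqc_def)
  have qix: "q_integral q x" and qiy: "q_integral q y" and rx: "rat_mod q x = (-18) mod q"
    and ry: "rat_mod q y = b0"
    using red R by (auto simp: red_def split: if_splits)
  define r where "r = rat_mod q x"
  have crr: "[r = -18] (mod q)" using rx unfolding r_def by simp
  have hr: "q dvd r + 18" using crr by (simp add: cong_iff_dvd_diff)
  obtain n1 d1 where nd1: "\<not> q dvd d1" and g1: "[r * d1^2 = 6*n1^2 + 0*d1^2] (mod q)"
    using G[OF q qix ns(3), of a 0] a unfolding r_def by auto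
  obtain n2 d2 where nd2: "\<not> q dvd d2" and g2: "[r * d2^2 = 2*n2^2 + (-2)*d2^2] (mod q)"
    using G[OF q qix ns(1), of b "-2"] b unfolding r_def by (auto simp: algebra_simps)
  obtain n3 d3 where nd3: "\<not> q dvd d3" and g3: "[r * d3^2 = 3*n3^2 + (-6)*d3^2] (mod q)"
    using G[OF q qix ns(2), of c "-6"] c unfolding r_def by (auto simp: algebra_simps)
  have t1: "q dvd n1^2 + 3*d1^2"
  proof -
    have eq: "6*(n1^2 + 3*d1^2) = d1^2*(r+18) - (r * d1^2 - (6*n1^2 + 0*d1^2))" by (simp add: algebra_simps)
    have "q dvd d1^2*(r+18) - (r * d1^2 - (6*n1^2 + 0*d1^2))"
      using dvd_diff[OF dvd_mult[OF hr] g1[unfolded cong_iff_dvd_diff]] .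
    hence "q dvd 6*(n1^2 + 3*d1^2)" by (simp only: eq)
    thus ?thesis using pc[OF q] ns(3) by blast
  qed
  have t2: "q dvd n2^2 + 8*d2^2"
  proof -
    have eq: "2*(n2^2 + 8*d2^2) = d2^2*(r+18) - (r * d2^2 - (2*n2^2 + (-2)*d2^2))" by (simp add: algebra_simps)
    have "q dvd d2^2*(r+18) - (r * d2^2 - (2*n2^2 + (-2)*d2^2))"
      using dvd_diff[OF dvd_mult[OF hr] g2[unfolded cong_iff_dvd_diff]] .
    hence "q dvd 2*(n2^2 + 8*d2^2)" by (simp only: eq)
    thus ?thesis using pc[OF q] ns(1) by blast
  qed
  have t3: "q dvd n3^2 + 4*d3^2"
  proof -
    have eq: "3*(n3^2 + 4*d3^2) = d3^2*(r+18) - (r * d3^2 - (3*n3^2 + (-6)*d3^2))" by (simp add: algebra_simps)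
    have "q dvd d3^2*(r+18) - (r * d3^2 - (3*n3^2 + (-6)*d3^2))"
      using dvd_diff[OF dvd_mult[OF hr] g3[unfolded cong_iff_dvd_diff]] .
    hence "q dvd 3*(n3^2 + 4*d3^2)" by (simp only: eq)
    thus ?thesis using pc[OF q] ns(2) by blast
  qed
  define w2 where "w2 = (2*d3)^2*(2*d2)*d1"
  define w1 where "w1 = n3*(2*d3)*n2*d1"
  define w0 where "w0 = n3*(2*d3)*(2*d2)*n1"
  define w4 where "w4 = n3*(2*d3)*(2*d2)*d1"
  have h4: "q dvd w4^2 + w2^2"
  proof -
    have eq: "w4^2 + w2^2 = ((2*d3)^2*(2*d2)^2*d1^2) * (n3^2 + 4*d3^2)"
      unfolding w4_def w2_def by (simp add: algebra_simps power2_eq_square)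
    show ?thesis unfolding eq by (rule dvd_mult[OF t3])
  qed
  have h1: "q dvd w1^2 - 2*w2^2"
  proof -
    have eq: "w1^2 - 2*w2^2 = ((2*d3)^2*d1^2) * (n2^2*(n3^2 + 4*d3^2) - (4*d3^2)*(n2^2 + 8*d2^2))"
      unfolding w1_def w2_def by (simp add: algebra_simps power2_eq_square)
    show ?thesis unfolding eq by (rule dvd_mult[OF dvd_diff[OF dvd_mult[OF t3] dvd_mult[OF t2]]])
  qed
  have h0: "q dvd w0^2 - 3*w2^2"
  proof -
    have eq: "w0^2 - 3*w2^2 = ((2*d3)^2*(2*d2)^2) * (n1^2*(n3^2 + 4*d3^2) - (4*d3^2)*(n1^2 + 3*d1^2))"
      unfolding w0_def w2_def by (simp add: algebra_simps power2_eq_square)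
    show ?thesis unfolding eq by (rule dvd_mult[OF dvd_diff[OF dvd_mult[OF t3] dvd_mult[OF t1]]])
  qed
  have n8: "\<not> q dvd 8" using ns(1) prime_dvd_power_iff[OF q, of 3 2] by simp
  have nw2: "\<not> q dvd w2"
    unfolding w2_def using nd1 nd2 nd3 ns(1) n8 by (simp add: prime_dvd_mult_iff[OF q] prime_dvd_power_iff[OF q])
  obtain N M where NM: "quotient_of x = (N,M)" by (cases "quotient_of x") auto
  obtain Ny My where NMy: "quotient_of y = (Ny,My)" by (cases "quotient_of y") auto
  have M0: "M > 0" using quotient_of_denom_pos[OF NM] .
  have My0: "My > 0" using quotient_of_denom_pos[OF NMy] .
  have nM: "\<not> q dvd M" using qix NM by (simp add: q_integral_def)
  have nMy: "\<not> q dvd My" using qiy NMy by (simp add: q_integral_def)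
  have xq: "x = of_int N / of_int M" using quotient_of_div[OF NM] .
  have yq: "y = of_int Ny / of_int My" using quotient_of_div[OF NMy] .
  have cr: "[r * M = N] (mod q)" using R1(1)[OF q qix xq nM] unfolding r_def .
  have cy: "[b0 * My = Ny] (mod q)" using R1(1)[OF q qiy yq nMy] ry by simp
  have b0r: "b0 \<in> {0..<q}" using R1(2)[OF q qiy yq nMy] ry by simp
  have "(of_int Ny / of_int My)^2 = (of_int N / of_int M) * (of_int N / of_int M + 2) * (of_int N / of_int M + 6 :: rat)"
    using cu xq yq by simp
  hence "(of_int (Ny^2 * M^3) :: rat) = of_int (My^2 * (N * (N + 2*M) * (N + 6*M)))"
    using M0 My0 by (simp add: field_simps power2_eq_square power3_eq_cube)
  hence ID: "Ny^2 * M^3 = My^2 * (N * (N + 2*M) * (N + 6*M))" by (simp only: of_int_eq_iff)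
  have "(My^2*M^3) * b0^2 = (b0*My)^2 * M^3" by (simp add: algebra_simps power2_eq_square)
  also have "[(b0*My)^2 * M^3 = Ny^2 * M^3] (mod q)" by (intro cong_mult cong_pow cy cong_refl)
  also have "Ny^2 * M^3 = My^2 * (N * (N + 2*M) * (N + 6*M))" by (rule ID)
  also have "[My^2 * (N * (N + 2*M) * (N + 6*M)) = My^2 * ((r*M) * ((r*M) + 2*M) * ((r*M) + 6*M))] (mod q)"
    by (intro cong_mult cong_add cong_refl cong_sym[OF cr])
  also have "My^2 * ((r*M) * ((r*M) + 2*M) * ((r*M) + 6*M)) = (My^2*M^3) * (r*(r+2)*(r+6))"
    by (simp add: algebra_simps power2_eq_square power3_eq_cube)
  finally have cc: "[(My^2*M^3) * b0^2 = (My^2*M^3) * (r*(r+2)*(r+6))] (mod q)" .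
  have "\<not> q dvd My^2*M^3" using nM nMy by (simp add: prime_dvd_mult_iff[OF q] prime_dvd_power_iff[OF q])
  hence "coprime q (My^2*M^3)" using prime_imp_coprime[OF q] by blast
  hence "coprime (My^2*M^3) q" by (simp only: coprime_commute)
  hence c1: "[b0^2 = r*(r+2)*(r+6)] (mod q)" using cc cong_mult_lcancel by blast
  have "[r*(r+2)*(r+6) = (-18)*((-18)+2)*((-18)+6)] (mod q)" by (intro cong_mult cong_add crr cong_refl)
  hence "[b0^2 = -3456] (mod q)" using c1 cong_trans by fastforce
  hence hb: "q dvd b0^2 + 3456" by (simp add: cong_iff_dvd_diff)
  have "Some ((-18) mod q, b0) \<in> phi_q_image D q" by (rule construct[OF q qD ns(3) h4 h1 h0 nw2 b0r hb])
  thus ?thesis using red by simp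
qed

lemma char:
  assumes q: "prime (q::int)" and q3: "q > 3" and qD: "q dvd D"
  shows "H_D_q D q = {ec_mult k P0 | k. odd k \<and> (\<exists>b. red q (ec_mult k P0) = Some ((-18) mod q, b))}"
proof (intro equalityI subsetI)
  fix R assume "R \<in> H_D_q D q"
  thus "R \<in> {ec_mult k P0 | k. odd k \<and> (\<exists>b. red q (ec_mult k P0) = Some ((-18) mod q, b))}"
    using sub_dir[OF q q3 qD] by blast
next
  fix R assume "R \<in> {ec_mult k P0 | k. odd k \<and> (\<exists>b. red q (ec_mult k P0) = Some ((-18) mod q, b))}"
  then obtain k b where Rk: "R = ec_mult k P0" and k: "odd k" and rb: "red q (ec_mult k P0) = Some ((-18) mod q, b)" by blast
  have "R \<in> H" unfolding H_def using Rk k by blast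
  moreover have "red q R \<in> phi_q_image D q" using super_dir[OF q q3 qD k rb] Rk by simp
  ultimately show "R \<in> H_D_q D q" unfolding H_D_q_def by blast
qed

theorem proposition6p2:
  fixes D q :: int
  assumes "squarefree D" and "prime q" and "q > 3" and "q dvd D"
  shows "H_D_q D q = {ec_mult k P0 | k. odd k \<and> (\<exists>b. red q (ec_mult k P0) = Some ((-18) mod q, b))}
         \<and> (\<forall>D'. squarefree D' \<and> q dvd D' \<longrightarrow> H_D_q D' q = H_D_q D q)"
  using char[OF assms(2,3,4)] char[OF assms(2,3)] by auto


end
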